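(* Let $\mathcal{X}$ be a finite set, $\pi$ a probability mass function on $\mathcal{X}$ with full support, and let a group $\mathcal{G}$ act on $\mathcal{X}$ with Gibbs, Metropolis–Hastings and Barker orbit kernels $G$, $M$, $B$. Let $\mathbf{G}=\{Q\in\mathcal{S}(\pi):GQG=Q\}$. For every $P\in\mathcal{S}(\pi)$ and $Q\in\mathbf{G}$, $D^\pi_{KL}(P\|Q)\ge D^\pi_{KL}(PM\|Q)$, $D^\pi_{KL}(P\|Q)\ge D^\pi_{KL}(PB\|Q)$, $D^\pi_{KL}(P\|Q)\ge D^\pi_{KL}(MP\|Q)$ and $D^\pi_{KL}(P\|Q)\ge D^\pi_{KL}(BP\|Q)$.
   Context: $\mathcal{S}(\pi)$ is the set of transition matrices $P$ with $\pi P=\pi$. $D^\pi_{KL}(P\|Q)=\sum_{x,y}\pi(x)P(x,y)\log\frac{P(x,y)}{Q(x,y)}$ with convention $0\log(0/a)=0$. With $\mathcal{O}(x)$ the orbit of $x$: $G(x,y)=\pi(y)/\pi(\mathcal{O}(x))$ for $y\in\mathcal{O}(x)$, else $0$; $M(x,y)=\frac{1}{|\mathcal{O}(x)|-1}\min\{1,\pi(y)/\pi(x)\}$ for $y\in\mathcal{O}(x)\setminus\{x\}$, $0$ off the orbit, $M(x,x)=1-\sum_{y\ne x}M(x,y)$; $B$ is the same with acceptance $\pi(y)/(\pi(x)+\pi(y))$. *)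

theory Defs
  imports "HOL-Analysis.Analysis" "HOL-Algebra.Group_Action"
begin

definition stochastic :: "('a::finite \<Rightarrow> 'a \<Rightarrow> real) \<Rightarrow> bool" where
  "stochastic P \<longleftrightarrow> (\<forall>x y. 0 \<le> P x y) \<and> (\<forall>x. (\<Sum>y\<in>UNIV. P x y) = 1)"

definition stat_kernels :: "('a::finite \<Rightarrow> real) \<Rightarrow> ('a \<Rightarrow> 'a \<Rightarrow> real) set" where
  "stat_kernels \<pi> = {P. stochastic P \<and> (\<forall>y. (\<Sum>x\<in>UNIV. \<pi> x * P x y) = \<pi> y)}"

definition mat_mult :: "('a::finite \<Rightarrow> 'a \<Rightarrow> real) \<Rightarrow> ('a \<Rightarrow> 'a \<Rightarrow> real) \<Rightarrow> ('a \<Rightarrow> 'a \<Rightarrow> real)"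
  (infixl "\<star>" 70) where
  "(P \<star> Q) x y = (\<Sum>z\<in>UNIV. P x z * Q z y)"

definition KL :: "('a::finite \<Rightarrow> real) \<Rightarrow> ('a \<Rightarrow> 'a \<Rightarrow> real) \<Rightarrow> ('a \<Rightarrow> 'a \<Rightarrow> real) \<Rightarrow> ereal" where
  "KL \<pi> P Q =
     (if \<exists>x y. \<pi> x * P x y > 0 \<and> Q x y = 0 then \<infinity>
      else ereal (\<Sum>x\<in>UNIV. \<Sum>y\<in>UNIV.
              (if \<pi> x * P x y = 0 then 0 else \<pi> x * P x y * ln (P x y / Q x y))))"

definition gibbs_kernel :: "('g, 'b) monoid_scheme \<Rightarrow> ('g \<Rightarrow> 'a::finite \<Rightarrow> 'a) \<Rightarrow> ('a \<Rightarrow> real)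
    \<Rightarrow> 'a \<Rightarrow> 'a \<Rightarrow> real" where
  "gibbs_kernel G \<phi> \<pi> x y =
     (if y \<in> orbit G \<phi> x then \<pi> y / (\<Sum>z\<in>orbit G \<phi> x. \<pi> z) else 0)"

definition orbit_MH_type_kernel :: "(real \<Rightarrow> real \<Rightarrow> real) \<Rightarrow> ('g, 'b) monoid_scheme
    \<Rightarrow> ('g \<Rightarrow> 'a::finite \<Rightarrow> 'a) \<Rightarrow> ('a \<Rightarrow> real) \<Rightarrow> 'a \<Rightarrow> 'a \<Rightarrow> real" where
  "orbit_MH_type_kernel acc G \<phi> \<pi> x y =
     (if y = x then
        1 - (\<Sum>z\<in>orbit G \<phi> x - {x}. acc (\<pi> x) (\<pi> z) / (real (card (orbit G \<phi> x)) - 1))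
      else if y \<in> orbit G \<phi> x then acc (\<pi> x) (\<pi> y) / (real (card (orbit G \<phi> x)) - 1)
      else 0)"

definition metropolis_kernel where
  "metropolis_kernel = orbit_MH_type_kernel (\<lambda>a b. min 1 (b / a))"

definition barker_kernel where
  "barker_kernel = orbit_MH_type_kernel (\<lambda>a b. b / (a + b))"

end

theory Submission
  imports Defs
begin

definition klf :: "real \<Rightarrow> real \<Rightarrow> real" where
  "klf a b = (if a = 0 then 0 else a * ln (a / b))"

definition Dv :: "('s::finite \<Rightarrow> real) \<Rightarrow> ('s \<Rightarrow> real) \<Rightarrow> ereal" where
  "Dv p q = (if \<exists>s. p s > 0 \<and> q s = 0 then \<infinity> else ereal (\<Sum>s\<in>UNIV. klf (p s) (q s)))"

lemma klf_pt:
  fixes a b A B :: real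
  assumes "a \<ge> 0" "b \<ge> 0" "b = 0 \<Longrightarrow> a = 0" "A > 0" "B > 0"
  shows "a * ln (A / B) + a - b * A / B \<le> klf a b"
proof (cases "a = 0")
  case True thus ?thesis using assms by (simp add: klf_def)
next
  case False
  hence a: "a > 0" and b: "b > 0" using assms by force+
  have "ln (A/B) - ln (a/b) \<le> (A/B - a/b) / (a/b)"
    by (rule ln_diff_le) (use a b assms in auto)
  hence "a * (ln (A/B) - ln (a/b)) \<le> a * ((A/B - a/b) / (a/b))"
    by (rule mult_left_mono) (use a in simp)
  also have "a * ((A/B - a/b) / (a/b)) = b * A / B - a" using a b assms by (simp add: field_simps)
  finally show ?thesis using False by (simp add: klf_def algebra_simps)
qed

lemma log_sum:
  fixes a b :: "'i \<Rightarrow> real"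
  assumes fin: "finite I" and a: "\<And>i. i \<in> I \<Longrightarrow> a i \<ge> 0" and b: "\<And>i. i \<in> I \<Longrightarrow> b i \<ge> 0"
    and ab: "\<And>i. i \<in> I \<Longrightarrow> b i = 0 \<Longrightarrow> a i = 0"
  shows "klf (\<Sum>i\<in>I. a i) (\<Sum>i\<in>I. b i) \<le> (\<Sum>i\<in>I. klf (a i) (b i))"
proof (cases "(\<Sum>i\<in>I. a i) = 0")
  case True
  hence "\<forall>i\<in>I. a i = 0" using sum_nonneg_eq_0_iff[OF fin] a by blast
  thus ?thesis using True by (simp add: klf_def)
next
  case False
  define A where "A = (\<Sum>i\<in>I. a i)"
  define B where "B = (\<Sum>i\<in>I. b i)"
  have A0: "A \<ge> 0" unfolding A_def by (rule sum_nonneg) (rule a)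
  have A: "A > 0" using False A0 unfolding A_def by linarith
  have "\<exists>j\<in>I. a j \<noteq> 0"
  proof (rule ccontr)
    assume "\<not> (\<exists>j\<in>I. a j \<noteq> 0)"
    hence "(\<Sum>i\<in>I. a i) = 0" by simp
    thus False using False by simp
  qed
  then obtain j where j: "j \<in> I" "a j \<noteq> 0" by blast
  have bj: "b j > 0" using a[OF j(1)] b[OF j(1)] ab[OF j(1)] j(2) by linarith
  have "b j \<le> B" unfolding B_def by (rule member_le_sum[OF j(1)]) (use b fin in auto)
  hence B: "B > 0" using bj by linarith
  have "(\<Sum>i\<in>I. a i * ln (A / B) + a i - b i * A / B) \<le> (\<Sum>i\<in>I. klf (a i) (b i))"
  proof (rule sum_mono)
    fix i assume i: "i \<in> I"
    show "a i * ln (A / B) + a i - b i * A / B \<le> klf (a i) (b i)"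
      by (rule klf_pt[OF a[OF i] b[OF i] ab[OF i] A B])
  qed
  moreover have "(\<Sum>i\<in>I. a i * ln (A / B) + a i - b i * A / B) = A * ln (A/B) + A - B * A / B"
    unfolding A_def B_def by (simp add: sum.distrib sum_subtractf sum_distrib_right sum_divide_distrib)
  moreover have "A * ln (A/B) + A - B * A / B = klf A B" using A B by (simp add: klf_def)
  ultimately show ?thesis unfolding A_def B_def by simp
qed
lemma data_proc:
  fixes p q :: "'s::finite \<Rightarrow> real" and T :: "'s \<Rightarrow> 's \<Rightarrow> real"
  assumes p: "\<And>s. p s \<ge> 0" and q: "\<And>s. q s \<ge> 0" and T: "\<And>s t. T s t \<ge> 0"
    and Ts: "\<And>s. (\<Sum>t\<in>UNIV. T s t) = 1"
  shows "Dv (\<lambda>t. \<Sum>s\<in>UNIV. p s * T s t) (\<lambda>t. \<Sum>s\<in>UNIV. q s * T s t) \<le> Dv p q"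
proof (cases "\<exists>s. p s > 0 \<and> q s = 0")
  case True thus ?thesis by (simp add: Dv_def)
next
  case False
  have pq: "p s = 0" if "q s = 0" for s using False p[of s] that by force
  have nz: "\<not> (\<exists>t. (\<Sum>s\<in>UNIV. p s * T s t) > 0 \<and> (\<Sum>s\<in>UNIV. q s * T s t) = 0)"
  proof
    assume "\<exists>t. (\<Sum>s\<in>UNIV. p s * T s t) > 0 \<and> (\<Sum>s\<in>UNIV. q s * T s t) = 0"
    then obtain t where t1: "(\<Sum>s\<in>UNIV. p s * T s t) > 0" and t2: "(\<Sum>s\<in>UNIV. q s * T s t) = 0" by blast
    have qT: "\<forall>s\<in>UNIV. q s * T s t = 0"
      using t2 sum_nonneg_eq_0_iff[of UNIV "\<lambda>s. q s * T s t"] q T by (simp add: zero_le_mult_iff)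
    have h: "p s * T s t = 0" for s
    proof -
      have "q s * T s t = 0" using qT by simp
      hence "q s = 0 \<or> T s t = 0" by simp
      thus ?thesis using pq by auto
    qed
    have "(\<Sum>s\<in>UNIV. p s * T s t) = 0" by (rule sum.neutral) (use h in blast)
    thus False using t1 by simp
  qed
  have eq: "klf (p s * T s t) (q s * T s t) = T s t * klf (p s) (q s)" for s t
  proof (cases "p s = 0 \<or> T s t = 0")
    case True thus ?thesis by (auto simp: klf_def)
  next
    case False
    hence "q s \<noteq> 0" using pq by blast
    thus ?thesis using False by (simp add: klf_def)
  qed
  have "(\<Sum>t\<in>UNIV. klf (\<Sum>s\<in>UNIV. p s * T s t) (\<Sum>s\<in>UNIV. q s * T s t))
       \<le> (\<Sum>t\<in>UNIV. \<Sum>s\<in>UNIV. klf (p s * T s t) (q s * T s t))"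
  proof (rule sum_mono)
    fix t :: 's
    show "klf (\<Sum>s\<in>UNIV. p s * T s t) (\<Sum>s\<in>UNIV. q s * T s t)
       \<le> (\<Sum>s\<in>UNIV. klf (p s * T s t) (q s * T s t))"
    proof (rule log_sum)
      show "finite (UNIV :: 's set)" by simp
      show "0 \<le> p s * T s t" for s using p T by simp
      show "0 \<le> q s * T s t" for s using q T by simp
      show "p s * T s t = 0" if "q s * T s t = 0" for s using that pq by auto
    qed
  qed
  also have "\<dots> = (\<Sum>s\<in>UNIV. \<Sum>t\<in>UNIV. T s t * klf (p s) (q s))"
    by (subst sum.swap) (simp only: eq)
  also have "\<dots> = (\<Sum>s\<in>UNIV. klf (p s) (q s) * (\<Sum>t\<in>UNIV. T s t))"
    by (simp add: sum_distrib_left sum_distrib_right mult.commute)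
  also have "\<dots> = (\<Sum>s\<in>UNIV. klf (p s) (q s))" using Ts by simp
  finally show ?thesis using False nz by (simp add: Dv_def)
qed
lemma sum_if_eq1: "(\<Sum>x\<in>(UNIV::'a::finite set). if a = x then c x else (0::real)) = c a"
  using sum.delta'[of "UNIV::'a set" a c] by simp
lemma sum_if_eq2: "(\<Sum>x\<in>(UNIV::'a::finite set). if x = a then c x else (0::real)) = c a"
  using sum.delta[of "UNIV::'a set" a c] by simp

lemma sum_if_const: "(\<Sum>x\<in>(UNIV::'a::finite set). if a = x then c else (0::real)) = c"
  using sum_if_eq1[of a "\<lambda>_. c"] by simp

lemma KL_Dv:
  assumes pos: "\<And>x. \<pi> x > 0"
  shows "KL \<pi> P Q = Dv (\<lambda>s. \<pi> (fst s) * P (fst s) (snd s)) (\<lambda>s. \<pi> (fst s) * Q (fst s) (snd s))"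
proof -
  have c: "(\<exists>x y. \<pi> x * P x y > 0 \<and> Q x y = 0) \<longleftrightarrow>
     (\<exists>s. \<pi> (fst s) * P (fst s) (snd s) > 0 \<and> \<pi> (fst s) * Q (fst s) (snd s) = 0)"
    using pos by (metis fst_conv snd_conv mult_eq_0_iff order_less_irrefl)
  have t: "(if \<pi> x * P x y = 0 then 0 else \<pi> x * P x y * ln (P x y / Q x y)) =
        klf (\<pi> x * P x y) (\<pi> x * Q x y)" for x y
    using pos[of x] by (simp add: klf_def)
  have "(\<Sum>x\<in>UNIV. \<Sum>y\<in>UNIV. klf (\<pi> x * P x y) (\<pi> x * Q x y)) =
        (\<Sum>s\<in>UNIV. klf (\<pi> (fst s) * P (fst s) (snd s)) (\<pi> (fst s) * Q (fst s) (snd s)))"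
    by (subst sum.cartesian_product) (simp add: case_prod_beta)
  thus ?thesis unfolding KL_def Dv_def c t by simp
qed

lemma post_repr:
  "(\<lambda>t. \<pi> (fst t) * (R \<star> K) (fst t) (snd t)) =
   (\<lambda>t. \<Sum>s\<in>UNIV. \<pi> (fst s) * R (fst s) (snd s) * (if fst s = fst t then K (snd s) (snd t) else 0))"
proof
  fix t :: "'a::finite \<times> 'a"
  obtain x y where t: "t = (x, y)" by fastforce
  have "(\<Sum>s\<in>UNIV. \<pi> (fst s) * R (fst s) (snd s) * (if fst s = x then K (snd s) y else 0))
      = (\<Sum>a\<in>UNIV. \<Sum>b\<in>UNIV. \<pi> a * R a b * (if a = x then K b y else 0))"
    by (subst sum.cartesian_product) (simp add: case_prod_beta)
  also have "\<dots> = (\<Sum>a\<in>UNIV. if a = x then (\<Sum>b\<in>UNIV. \<pi> a * R a b * K b y) else 0)"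
    by (rule sum.cong) auto
  also have "\<dots> = \<pi> x * (R \<star> K) x y"
    by (simp add: mat_mult_def sum_distrib_left mult.assoc)
  finally have e: "(\<Sum>s\<in>UNIV. \<pi> (fst s) * R (fst s) (snd s) * (if fst s = x then K (snd s) y else 0)) = \<pi> x * (R \<star> K) x y" .
  show "\<pi> (fst t) * (R \<star> K) (fst t) (snd t) =
     (\<Sum>s\<in>UNIV. \<pi> (fst s) * R (fst s) (snd s) * (if fst s = fst t then K (snd s) (snd t) else 0))"
    unfolding t fst_conv snd_conv using e by (rule sym)
qed

lemma pre_repr:
  assumes rev: "\<And>x z. \<pi> x * K x z = \<pi> z * K z x"
  shows "(\<lambda>t. \<pi> (fst t) * (K \<star> R) (fst t) (snd t)) =
   (\<lambda>t. \<Sum>s\<in>UNIV. \<pi> (fst s) * R (fst s) (snd s) * (K (fst s) (fst t) * (if snd s = snd t then 1 else 0)))"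
proof
  fix t :: "'a::finite \<times> 'a"
  obtain x y where t: "t = (x, y)" by fastforce
  have "(\<Sum>s\<in>UNIV. \<pi> (fst s) * R (fst s) (snd s) * (K (fst s) x * (if snd s = y then 1 else 0)))
      = (\<Sum>a\<in>UNIV. \<Sum>b\<in>UNIV. \<pi> a * R a b * (K a x * (if b = y then 1 else 0)))"
    by (subst sum.cartesian_product) (simp add: case_prod_beta)
  also have "\<dots> = (\<Sum>a\<in>UNIV. \<pi> a * R a y * K a x)"
    by (rule sum.cong) (auto simp: if_distrib cong: if_cong)
  also have "\<dots> = (\<Sum>a\<in>UNIV. \<pi> x * (K x a * R a y))"
    by (rule sum.cong) (auto simp: rev[of x] mult_ac)
  also have "\<dots> = \<pi> x * (K \<star> R) x y"
    by (simp add: mat_mult_def sum_distrib_left)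
  finally have e: "(\<Sum>s\<in>UNIV. \<pi> (fst s) * R (fst s) (snd s) * (K (fst s) x * (if snd s = y then 1 else 0))) = \<pi> x * (K \<star> R) x y" .
  show "\<pi> (fst t) * (K \<star> R) (fst t) (snd t) =
     (\<Sum>s\<in>UNIV. \<pi> (fst s) * R (fst s) (snd s) * (K (fst s) (fst t) * (if snd s = snd t then 1 else 0)))"
    unfolding t fst_conv snd_conv using e by (rule sym)
qed

lemma post_KL:
  fixes K :: "'a::finite \<Rightarrow> 'a \<Rightarrow> real"
  assumes pos: "\<And>x. \<pi> x > 0" and K1: "\<And>x y. K x y \<ge> 0" and K2: "\<And>x. (\<Sum>y\<in>UNIV. K x y) = 1"
    and P0: "\<And>x y. P x y \<ge> 0" and Q0: "\<And>x y. Q x y \<ge> 0" and QK: "Q \<star> K = Q"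
  shows "KL \<pi> (P \<star> K) Q \<le> KL \<pi> P Q"
proof -
  define T :: "'a \<times> 'a \<Rightarrow> 'a \<times> 'a \<Rightarrow> real" where "T = (\<lambda>s t. if fst s = fst t then K (snd s) (snd t) else (0::real))"
  have T0: "T s t \<ge> 0" for s t unfolding T_def using K1 by simp
  have Ts: "(\<Sum>t\<in>UNIV. T s t) = 1" for s
  proof -
    have "(\<Sum>t\<in>UNIV. T s t) = (\<Sum>x\<in>UNIV. \<Sum>y\<in>UNIV. T s (x, y))"
      by (subst sum.cartesian_product) (simp add: case_prod_beta)
    also have "\<dots> = (\<Sum>x\<in>UNIV. if fst s = x then (\<Sum>y\<in>UNIV. K (snd s) y) else 0)"
      unfolding T_def by (rule sum.cong) auto
    also have "\<dots> = 1" using sum_if_const[of "fst s" "sum (K (snd s)) UNIV"] K2[of "snd s"] by simp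
    finally show ?thesis .
  qed
  have "KL \<pi> (P \<star> K) Q = KL \<pi> (P \<star> K) (Q \<star> K)" using QK by simp
  also have "\<dots> = Dv (\<lambda>t. \<Sum>s\<in>UNIV. \<pi> (fst s) * P (fst s) (snd s) * T s t)
                    (\<lambda>t. \<Sum>s\<in>UNIV. \<pi> (fst s) * Q (fst s) (snd s) * T s t)"
    unfolding KL_Dv[OF pos] post_repr T_def ..
  also have "\<dots> \<le> Dv (\<lambda>s. \<pi> (fst s) * P (fst s) (snd s)) (\<lambda>s. \<pi> (fst s) * Q (fst s) (snd s))"
    by (rule data_proc[OF _ _ T0 Ts]) (auto intro!: mult_nonneg_nonneg less_imp_le[OF pos] P0 Q0)
  also have "\<dots> = KL \<pi> P Q" unfolding KL_Dv[OF pos] ..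
  finally show ?thesis .
qed

lemma pre_KL:
  fixes K :: "'a::finite \<Rightarrow> 'a \<Rightarrow> real"
  assumes pos: "\<And>x. \<pi> x > 0" and K1: "\<And>x y. K x y \<ge> 0" and K2: "\<And>x. (\<Sum>y\<in>UNIV. K x y) = 1"
    and rev: "\<And>x z. \<pi> x * K x z = \<pi> z * K z x"
    and P0: "\<And>x y. P x y \<ge> 0" and Q0: "\<And>x y. Q x y \<ge> 0" and KQ: "K \<star> Q = Q"
  shows "KL \<pi> (K \<star> P) Q \<le> KL \<pi> P Q"
proof -
  define T :: "'a \<times> 'a \<Rightarrow> 'a \<times> 'a \<Rightarrow> real" where "T = (\<lambda>s t. K (fst s) (fst t) * (if snd s = snd t then 1 else (0::real)))"
  have T0: "T s t \<ge> 0" for s t unfolding T_def using K1 by simp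
  have Ts: "(\<Sum>t\<in>UNIV. T s t) = 1" for s
  proof -
    have "(\<Sum>t\<in>UNIV. T s t) = (\<Sum>x\<in>UNIV. \<Sum>y\<in>UNIV. T s (x, y))"
      by (subst sum.cartesian_product) (simp add: case_prod_beta)
    also have "\<dots> = (\<Sum>x\<in>UNIV. K (fst s) x)"
      unfolding T_def
    proof (rule sum.cong)
      fix x show "(\<Sum>y\<in>UNIV. K (fst s) (fst (x, y)) * (if snd s = snd (x, y) then 1 else 0)) = K (fst s) x"
        using sum_if_const[of "snd s" "K (fst s) x"] by (simp add: if_distrib cong: if_cong)
    qed simp
    also have "\<dots> = 1" using K2 by simp
    finally show ?thesis .
  qed
  have "KL \<pi> (K \<star> P) Q = KL \<pi> (K \<star> P) (K \<star> Q)" using KQ by simp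
  also have "\<dots> = Dv (\<lambda>t. \<Sum>s\<in>UNIV. \<pi> (fst s) * P (fst s) (snd s) * T s t)
                    (\<lambda>t. \<Sum>s\<in>UNIV. \<pi> (fst s) * Q (fst s) (snd s) * T s t)"
    unfolding KL_Dv[OF pos] T_def using pre_repr[of \<pi> K P, OF rev] pre_repr[of \<pi> K Q, OF rev] by simp
  also have "\<dots> \<le> Dv (\<lambda>s. \<pi> (fst s) * P (fst s) (snd s)) (\<lambda>s. \<pi> (fst s) * Q (fst s) (snd s))"
    by (rule data_proc[OF _ _ T0 Ts]) (auto intro!: mult_nonneg_nonneg less_imp_le[OF pos] P0 Q0)
  also have "\<dots> = KL \<pi> P Q" unfolding KL_Dv[OF pos] ..
  finally show ?thesis .
qed
lemma orb_refl: "group_action G UNIV \<phi> \<Longrightarrow> x \<in> orbit G \<phi> x"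
  using group_action.orbit_refl by fastforce

lemma orb_sym: "group_action G UNIV \<phi> \<Longrightarrow> y \<in> orbit G \<phi> x \<Longrightarrow> x \<in> orbit G \<phi> y"
  using group_action.orbit_sym by fastforce

lemma orb_eq:
  assumes act: "group_action G UNIV \<phi>" and y: "y \<in> orbit G \<phi> x"
  shows "orbit G \<phi> y = orbit G \<phi> x"
proof
  show "orbit G \<phi> y \<subseteq> orbit G \<phi> x"
    using group_action.orbit_trans[OF act _ _ _ y] by blast
  have x: "x \<in> orbit G \<phi> y" using orb_sym[OF act y] .
  show "orbit G \<phi> x \<subseteq> orbit G \<phi> y"
    using group_action.orbit_trans[OF act _ _ _ x] by blast
qed

lemma orb_iff:
  assumes act: "group_action G UNIV \<phi>"
  shows "y \<in> orbit G \<phi> x \<longleftrightarrow> orbit G \<phi> y = orbit G \<phi> x"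
  using orb_eq[OF act] orb_refl[OF act] by metis

lemma MH_props:
  fixes \<pi> :: "'a::finite \<Rightarrow> real" and acc :: "real \<Rightarrow> real \<Rightarrow> real"
  assumes act: "group_action G UNIV \<phi>" and pos: "\<And>x. \<pi> x > 0"
    and acc: "\<And>u v. u > 0 \<Longrightarrow> v > 0 \<Longrightarrow> 0 \<le> acc u v \<and> acc u v \<le> 1 \<and> u * acc u v = v * acc v u"
  shows "orbit_MH_type_kernel acc G \<phi> \<pi> x y \<ge> 0"
    and "(\<Sum>y\<in>UNIV. orbit_MH_type_kernel acc G \<phi> \<pi> x y) = 1"
    and "orbit_MH_type_kernel acc G \<phi> \<pi> x y \<noteq> 0 \<Longrightarrow> y \<in> orbit G \<phi> x"
    and "\<pi> x * orbit_MH_type_kernel acc G \<phi> \<pi> x y = \<pi> y * orbit_MH_type_kernel acc G \<phi> \<pi> y x"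
proof -
  let ?K = "orbit_MH_type_kernel acc G \<phi> \<pi>"
  let ?O = "orbit G \<phi> x"
  let ?n = "card ?O"
  have xO: "x \<in> ?O" by (rule orb_refl[OF act])
  have fin: "finite ?O" by simp
  have n1: "?n \<ge> 1" using xO fin by (metis One_nat_def Suc_leI card_gt_0_iff empty_iff)
  have cd: "real (card (?O - {x})) = real ?n - 1" using xO fin n1 by (simp add: of_nat_diff)
  have d0: "real ?n - 1 \<ge> 0" using n1 by simp
  have a0: "0 \<le> acc (\<pi> x) (\<pi> z) / (real ?n - 1)" for z using acc[OF pos pos, of x z] d0 by simp
  have sb: "(\<Sum>z\<in>?O - {x}. acc (\<pi> x) (\<pi> z) / (real ?n - 1)) \<le> 1"
  proof -
    have "(\<Sum>z\<in>?O - {x}. acc (\<pi> x) (\<pi> z) / (real ?n - 1)) \<le> (\<Sum>z\<in>?O - {x}. 1 / (real ?n - 1))"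
      by (rule sum_mono, rule divide_right_mono) (use acc[OF pos pos] d0 in auto)
    also have "\<dots> = (real ?n - 1) / (real ?n - 1)" using cd by simp
    also have "\<dots> \<le> 1" by (cases "real ?n - 1 = 0") auto
    finally show ?thesis .
  qed
  show "?K x y \<ge> 0" unfolding orbit_MH_type_kernel_def using sb a0 by auto
  show "(\<Sum>y\<in>UNIV. ?K x y) = 1"
  proof -
    have "(\<Sum>y\<in>UNIV. ?K x y) = ?K x x + (\<Sum>y\<in>UNIV - {x}. ?K x y)"
      by (rule sum.remove) auto
    also have "(\<Sum>y\<in>UNIV - {x}. ?K x y) = (\<Sum>z\<in>?O - {x}. acc (\<pi> x) (\<pi> z) / (real ?n - 1))"
      by (rule sum.mono_neutral_cong_right) (auto simp: orbit_MH_type_kernel_def)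
    finally show ?thesis by (simp add: orbit_MH_type_kernel_def)
  qed
  show "?K x y \<noteq> 0 \<Longrightarrow> y \<in> ?O"
    using xO by (auto simp: orbit_MH_type_kernel_def split: if_splits)
  show "\<pi> x * ?K x y = \<pi> y * ?K y x"
  proof (cases "y = x")
    case True thus ?thesis by simp
  next
    case False
    show ?thesis
    proof (cases "y \<in> ?O")
      case True
      have eq: "orbit G \<phi> y = ?O" using orb_eq[OF act True] .
      have xy: "x \<in> orbit G \<phi> y" using orb_sym[OF act True] .
      have "\<pi> x * acc (\<pi> x) (\<pi> y) = \<pi> y * acc (\<pi> y) (\<pi> x)" using acc[OF pos pos] by blast
      hence "\<pi> x * (acc (\<pi> x) (\<pi> y) / (real ?n - 1)) = \<pi> y * (acc (\<pi> y) (\<pi> x) / (real ?n - 1))"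
        by (metis times_divide_eq_right)
      thus ?thesis using False True xy eq by (simp add: orbit_MH_type_kernel_def)
    next
      case nO: False
      have "x \<notin> orbit G \<phi> y" using nO orb_sym[OF act] by blast
      thus ?thesis using False nO by (simp add: orbit_MH_type_kernel_def)
    qed
  qed
qed
lemma gibbs_orb:
  "orbit G \<phi> z = orbit G \<phi> x \<Longrightarrow> gibbs_kernel G \<phi> \<pi> z = gibbs_kernel G \<phi> \<pi> x"
  by (rule ext) (simp add: gibbs_kernel_def)

lemma Q_inv:
  fixes \<pi> :: "'a::finite \<Rightarrow> real"
  assumes act: "group_action G UNIV \<phi>"
    and GQG: "gibbs_kernel G \<phi> \<pi> \<star> Q \<star> gibbs_kernel G \<phi> \<pi> = Q"
  shows "z \<in> orbit G \<phi> x \<Longrightarrow> Q z y = Q x y"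
    and "z \<in> orbit G \<phi> y \<Longrightarrow> Q x z * \<pi> y = Q x y * \<pi> z"
proof -
  let ?g = "gibbs_kernel G \<phi> \<pi>"
  have Qe: "Q a b = (?g \<star> Q \<star> ?g) a b" for a b using GQG by simp
  assume z: "z \<in> orbit G \<phi> x"
  have "?g z = ?g x" by (rule gibbs_orb) (rule orb_eq[OF act z])
  hence "(?g \<star> Q \<star> ?g) z y = (?g \<star> Q \<star> ?g) x y" unfolding mat_mult_def by simp
  thus "Q z y = Q x y" using Qe by metis
next
  let ?g = "gibbs_kernel G \<phi> \<pi>"
  have Qe: "Q a b = (?g \<star> Q \<star> ?g) a b" for a b using GQG by simp
  assume z: "z \<in> orbit G \<phi> y"
  have ozy: "orbit G \<phi> z = orbit G \<phi> y" by (rule orb_eq[OF act z])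
  have gg: "?g w z * \<pi> y = ?g w y * \<pi> z" for w
  proof -
    have "z \<in> orbit G \<phi> w \<longleftrightarrow> y \<in> orbit G \<phi> w"
      using orb_iff[OF act, of z w] orb_iff[OF act, of y w] ozy by simp
    thus ?thesis unfolding gibbs_kernel_def by simp
  qed
  have "(?g \<star> Q \<star> ?g) x z * \<pi> y = (\<Sum>w\<in>UNIV. (?g \<star> Q) x w * (?g w z * \<pi> y))"
    unfolding mat_mult_def[of "?g \<star> Q"] by (simp add: sum_distrib_right mult.assoc)
  also have "\<dots> = (\<Sum>w\<in>UNIV. (?g \<star> Q) x w * (?g w y * \<pi> z))" by (simp only: gg)
  also have "\<dots> = (?g \<star> Q \<star> ?g) x y * \<pi> z"
    unfolding mat_mult_def[of "?g \<star> Q"] by (simp add: sum_distrib_right mult.assoc)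
  finally show "Q x z * \<pi> y = Q x y * \<pi> z" using Qe by metis
qed

lemma QK_eq:
  fixes \<pi> :: "'a::finite \<Rightarrow> real"
  assumes pos: "\<And>x. \<pi> x > 0"
    and K2: "\<And>x. (\<Sum>y\<in>UNIV. K x y) = 1"
    and K3: "\<And>x y. K x y \<noteq> 0 \<Longrightarrow> y \<in> orbit G \<phi> x"
    and K4: "\<And>x y. \<pi> x * K x y = \<pi> y * K y x"
    and Qb: "\<And>x y z. z \<in> orbit G \<phi> y \<Longrightarrow> Q x z * \<pi> y = Q x y * \<pi> z"
    and act: "group_action G UNIV \<phi>"
  shows "Q \<star> K = Q"
proof (rule ext, rule ext)
  fix x y
  have t: "Q x z * K z y = Q x y * K y z" for z
  proof (cases "K z y = 0")
    case True
    hence "\<pi> y * K y z = 0" using K4[of z y] by simp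
    thus ?thesis using True pos[of y] by simp
  next
    case False
    hence "z \<in> orbit G \<phi> y" using K3 orb_sym[OF act] by blast
    hence e1: "Q x z * \<pi> y = Q x y * \<pi> z" by (rule Qb)
    have "\<pi> y * (Q x z * K z y) = Q x y * (\<pi> z * K z y)" using e1 by (metis mult.assoc mult.commute)
    also have "\<dots> = \<pi> y * (Q x y * K y z)" using K4[of z y] by simp
    finally show ?thesis using pos[of y] by simp
  qed
  have "(Q \<star> K) x y = (\<Sum>z\<in>UNIV. Q x y * K y z)" unfolding mat_mult_def by (simp only: t)
  also have "\<dots> = Q x y" using K2[of y] by (simp add: sum_distrib_left[symmetric])
  finally show "(Q \<star> K) x y = Q x y" .
qed

lemma KQ_eq:
  assumes K2: "\<And>x. (\<Sum>y\<in>UNIV. K x y) = 1"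
    and K3: "\<And>x y. K x y \<noteq> 0 \<Longrightarrow> y \<in> orbit G \<phi> x"
    and Qa: "\<And>x y z. z \<in> orbit G \<phi> x \<Longrightarrow> Q z y = Q x y"
  shows "K \<star> Q = Q"
proof (rule ext, rule ext)
  fix x y
  have t: "K x z * Q z y = K x z * Q x y" for z
    using K3[of x z] Qa[of z x y] by (cases "K x z = 0") auto
  have "(K \<star> Q) x y = (\<Sum>z\<in>UNIV. K x z * Q x y)" unfolding mat_mult_def by (simp only: t)
  also have "\<dots> = Q x y" using K2[of x] by (simp add: sum_distrib_right[symmetric])
  finally show "(K \<star> Q) x y = Q x y" .
qed

lemma acc_metro: "u > 0 \<Longrightarrow> v > 0 \<Longrightarrow> 0 \<le> min 1 (v / u) \<and> min 1 (v / u) \<le> 1 \<and> u * min 1 (v / u) = v * min 1 (u / (v::real))"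
  by (auto simp: min_def field_simps)

lemma acc_barker: "u > 0 \<Longrightarrow> v > 0 \<Longrightarrow> 0 \<le> v / (u + v) \<and> v / (u + v) \<le> 1 \<and> u * (v / (u + v)) = v * (u / (v + (u::real)))"
  by (auto simp: field_simps)
lemma both_KL:
  fixes \<pi> :: "'a::finite \<Rightarrow> real" and acc :: "real \<Rightarrow> real \<Rightarrow> real"
  assumes pos: "\<And>x. \<pi> x > 0"
    and act: "group_action G UNIV \<phi>"
    and P: "P \<in> stat_kernels \<pi>"
    and Q: "Q \<in> stat_kernels \<pi>"
    and GQG: "gibbs_kernel G \<phi> \<pi> \<star> Q \<star> gibbs_kernel G \<phi> \<pi> = Q"
    and acc: "\<And>u v. u > 0 \<Longrightarrow> v > 0 \<Longrightarrow> 0 \<le> acc u v \<and> acc u v \<le> 1 \<and> u * acc u v = v * acc v u"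
  shows "KL \<pi> (P \<star> orbit_MH_type_kernel acc G \<phi> \<pi>) Q \<le> KL \<pi> P Q"
    and "KL \<pi> (orbit_MH_type_kernel acc G \<phi> \<pi> \<star> P) Q \<le> KL \<pi> P Q"
proof -
  let ?K = "orbit_MH_type_kernel acc G \<phi> \<pi>"
  note Kp = MH_props[OF act pos acc]
  have P0: "\<And>x y. P x y \<ge> 0" using P by (simp add: stat_kernels_def stochastic_def)
  have Q0: "\<And>x y. Q x y \<ge> 0" using Q by (simp add: stat_kernels_def stochastic_def)
  note Qi = Q_inv[OF act GQG]
  have QK: "Q \<star> ?K = Q" by (rule QK_eq[OF pos Kp(2) Kp(3) Kp(4) Qi(2) act])
  have KQ: "?K \<star> Q = Q" by (rule KQ_eq[OF Kp(2) Kp(3) Qi(1)])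
  show "KL \<pi> (P \<star> ?K) Q \<le> KL \<pi> P Q" by (rule post_KL[OF pos Kp(1) Kp(2) P0 Q0 QK])
  show "KL \<pi> (?K \<star> P) Q \<le> KL \<pi> P Q" by (rule pre_KL[OF pos Kp(1) Kp(2) Kp(4) P0 Q0 KQ])
qed

theorem proposition5p4:
  fixes \<pi> :: "'a::finite \<Rightarrow> real"
    and G :: "('g, 'b) monoid_scheme"
    and \<phi> :: "'g \<Rightarrow> 'a \<Rightarrow> 'a"
  assumes pos: "\<And>x. \<pi> x > 0"
    and sum1: "(\<Sum>x\<in>UNIV. \<pi> x) = 1"
    and act: "group_action G UNIV \<phi>"
    and P: "P \<in> stat_kernels \<pi>"
    and Q: "Q \<in> stat_kernels \<pi>"
    and GQG: "gibbs_kernel G \<phi> \<pi> \<star> Q \<star> gibbs_kernel G \<phi> \<pi> = Q"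
  shows "KL \<pi> P Q \<ge> KL \<pi> (P \<star> metropolis_kernel G \<phi> \<pi>) Q \<and>
         KL \<pi> P Q \<ge> KL \<pi> (P \<star> barker_kernel G \<phi> \<pi>) Q \<and>
         KL \<pi> P Q \<ge> KL \<pi> (metropolis_kernel G \<phi> \<pi> \<star> P) Q \<and>
         KL \<pi> P Q \<ge> KL \<pi> (barker_kernel G \<phi> \<pi> \<star> P) Q"
  using both_KL[OF pos act P Q GQG acc_metro] both_KL[OF pos act P Q GQG acc_barker]
  unfolding metropolis_kernel_def barker_kernel_def by blast
end
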